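(* Let $(X,d)$ be a compact metric space and $\mathcal{W}$ a uniformly bounded open cover of $X$. Let $\mu=\sum_{i=1}^nm_i\delta_{x_i}\in\mathrm{Viet}^{\mathrm{m}}(\mathcal{W})$ (distinct $x_i$, $m_i>0$), let $\mathcal{U}=\{U_1,\dots,U_n\}$ be pairwise disjoint open subsets of $X$ with $x_i\in U_i$ and $\bigcup_iU_i$ contained in an element of $\mathcal{W}$, let $\varepsilon>0$, and let $B(\mu)=\tilde B(\mu)\cap\mathrm{Viet}^{\mathrm{m}}(\mathcal{W})$ where $\tilde B(\mu)$ is an open ball centered at $\mu$ in $P(X)$ with respect to the Wasserstein metric. Define the multivalued map $F\colon P_{\mathcal{U}}\cap B(\mu)\to P(X)$ by $F(\zeta)=\{\nu\in P(\mu,\mathcal{U},\varepsilon) : \mathrm{supp}(\nu)\subseteq\mathrm{supp}(\zeta)\}$. Then for every $\zeta\in P_{\mathcal{U}}\cap B(\mu)$, the set $F(\zeta)$ is non-empty, convex, and closed.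
   Context: $P(X)$ is the space of Borel probability measures on $X$ (with the weak topology, equivalently the Wasserstein metric since $X$ is compact). $\mathrm{Viet}^{\mathrm{m}}(\mathcal{W})\subseteq P(X)$ is the set of finitely supported probability measures whose support is contained in some element of $\mathcal{W}$. For finitely supported $\nu=\sum_jw_j\delta_{a_j}$ and $Y\subseteq X$, $\nu(Y)=\sum_{a_j\in Y}w_j$. $P_U=\{\nu\in\mathrm{Viet}^{\mathrm{m}}(\mathcal{W}):\mathrm{supp}(\nu)\cap U\ne\varnothing\}$, $P_{\mathcal{U}}=\bigcap_iP_{U_i}$, and $P(\mu,\mathcal{U},\varepsilon)=\{\nu\in\mathrm{Viet}^{\mathrm{m}}(\mathcal{W}) : \mathrm{supp}(\nu)\subseteq\bigcup_iU_i,\ |\nu(U_i)-\mu(U_i)|\le\varepsilon\ \forall i\}$. *)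

theory Defs
  imports "HOL-Probability.Probability"
begin

definition Pspace :: "'a::metric_space set \<Rightarrow> 'a measure set" where
  "Pspace X = {M. prob_space M \<and> space M = X \<and> sets M = sets (restrict_space borel X)}"

text \<open>Weak topology on P(X): initial topology of the maps M \<mapsto> integral of f, f continuous on X.\<close>
definition Cfun :: "'a::metric_space set \<Rightarrow> ('a \<Rightarrow> real) set" where
  "Cfun X = {f. continuous_on X f}"

definition weak_top :: "'a::metric_space set \<Rightarrow> 'a measure topology" where
  "weak_top X = pullback_topology (Pspace X)
      (\<lambda>M. restrict (\<lambda>f. integral\<^sup>L M f) (Cfun X))
      (product_topology (\<lambda>_. euclideanreal) (Cfun X))"

definition couplings :: "'a::metric_space set \<Rightarrow> 'a measure \<Rightarrow> 'a measure \<Rightarrow> ('a \<times> 'a) measure set" where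
  "couplings X M N = {\<pi>. prob_space \<pi> \<and> sets \<pi> = sets (restrict_space borel (X \<times> X))
      \<and> distr \<pi> (restrict_space borel X) fst = M \<and> distr \<pi> (restrict_space borel X) snd = N}"

definition wasserstein :: "'a::metric_space set \<Rightarrow> 'a measure \<Rightarrow> 'a measure \<Rightarrow> real" where
  "wasserstein X M N = Inf ((\<lambda>\<pi>. \<integral>p. dist (fst p) (snd p) \<partial>\<pi>) ` couplings X M N)"

text \<open>Support of a (finitely supported) measure: its atoms.\<close>
definition msupp :: "'a measure \<Rightarrow> 'a set" where
  "msupp M = {a \<in> space M. measure M {a} > 0}"

definition mval :: "'a measure \<Rightarrow> 'a set \<Rightarrow> real" where
  "mval M Y = (\<Sum>a\<in>msupp M \<inter> Y. measure M {a})"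

definition VietM :: "'a::metric_space set \<Rightarrow> 'a set set \<Rightarrow> 'a measure set" where
  "VietM X \<W> = {M \<in> Pspace X. finite (msupp M) \<and> measure M (X - msupp M) = 0
      \<and> (\<exists>W\<in>\<W>. msupp M \<subseteq> W)}"

definition P_U :: "'a::metric_space set \<Rightarrow> 'a set set \<Rightarrow> nat \<Rightarrow> (nat \<Rightarrow> 'a set) \<Rightarrow> 'a measure set" where
  "P_U X \<W> n U = {\<nu> \<in> VietM X \<W>. \<forall>i<n. msupp \<nu> \<inter> U i \<noteq> {}}"

definition P_mu :: "'a::metric_space set \<Rightarrow> 'a set set \<Rightarrow> 'a measure \<Rightarrow> nat \<Rightarrow> (nat \<Rightarrow> 'a set) \<Rightarrow> real
    \<Rightarrow> 'a measure set" where
  "P_mu X \<W> \<mu> n U \<epsilon> = {\<nu> \<in> VietM X \<W>. msupp \<nu> \<subseteq> (\<Union>i<n. U i)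
      \<and> (\<forall>i<n. \<bar>mval \<nu> (U i) - mval \<mu> (U i)\<bar> \<le> \<epsilon>)}"

definition Fmap :: "'a::metric_space set \<Rightarrow> 'a set set \<Rightarrow> 'a measure \<Rightarrow> nat \<Rightarrow> (nat \<Rightarrow> 'a set) \<Rightarrow> real
    \<Rightarrow> 'a measure \<Rightarrow> 'a measure set" where
  "Fmap X \<W> \<mu> n U \<epsilon> \<zeta> = {\<nu> \<in> P_mu X \<W> \<mu> n U \<epsilon>. msupp \<nu> \<subseteq> msupp \<zeta>}"

definition mix :: "real \<Rightarrow> 'a measure \<Rightarrow> 'a measure \<Rightarrow> 'a measure" where
  "mix t M N = measure_of (space M) (sets M)
     (\<lambda>A. ennreal t * emeasure M A + ennreal (1 - t) * emeasure N A)"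

definition mconvex :: "'a measure set \<Rightarrow> bool" where
  "mconvex S \<longleftrightarrow> (\<forall>M\<in>S. \<forall>N\<in>S. \<forall>t\<in>{0..1}. mix t M N \<in> S)"

end

theory Submission
  imports Defs
begin


lemma Pspace_D:
  assumes "\<nu> \<in> Pspace X"
  shows "prob_space \<nu>" "space \<nu> = X" "sets \<nu> = sets (restrict_space borel X)"
  using assms by (auto simp: Pspace_def)

lemma finite_sets:
  fixes X :: "'a::metric_space set"
  assumes "\<nu> \<in> Pspace X" "finite S" "S \<subseteq> X"
  shows "S \<in> sets \<nu>"
proof -
  have "S \<in> sets borel" using assms(2) by (simp add: finite_imp_closed borel_closed)
  then have "X \<inter> S \<in> sets (restrict_space borel X)" by (auto simp: sets_restrict_space)
  then show ?thesis using assms Pspace_D[OF assms(1)] by (simp add: Int_absorb1)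
qed

lemma meas_cong:
  assumes "\<nu> \<in> Pspace X"
  shows "borel_measurable \<nu> = borel_measurable (restrict_space borel X)"
  by (rule measurable_cong_sets) (simp_all add: Pspace_D[OF assms])

lemma cont_meas:
  fixes X :: "'a::metric_space set"
  assumes "\<nu> \<in> Pspace X" "continuous_on X f"
  shows "(f :: 'a \<Rightarrow> real) \<in> borel_measurable \<nu>"
  unfolding meas_cong[OF assms(1)] by (rule borel_measurable_continuous_on_restrict[OF assms(2)])

lemma cont_integrable:
  fixes X :: "'a::metric_space set"
  assumes "\<nu> \<in> Pspace X" "compact X" "continuous_on X f"
  shows "integrable \<nu> (f :: 'a \<Rightarrow> real)"
proof -
  interpret prob_space \<nu> using Pspace_D[OF assms(1)] by simp
  have "bounded (f ` X)" using assms by (simp add: compact_continuous_image compact_imp_bounded)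
  then obtain B where B: "\<forall>y\<in>f ` X. norm y \<le> B" unfolding bounded_iff by blast
  show ?thesis
  proof (rule integrable_const_bound[where B=B])
    show "AE x in \<nu>. norm (f x) \<le> B"
      by (rule AE_I2) (use B Pspace_D(2)[OF assms(1)] in blast)
    show "f \<in> borel_measurable \<nu>" by (rule cont_meas[OF assms(1,3)])
  qed
qed

lemma int_finite:
  fixes X :: "'a::metric_space set"
  assumes "\<nu> \<in> Pspace X" "compact X" "continuous_on X f" "finite S" "S \<subseteq> X"
    and null: "emeasure \<nu> (X - S) = 0"
  shows "integral\<^sup>L \<nu> (f :: 'a \<Rightarrow> real) = (\<Sum>s\<in>S. f s * measure \<nu> {s})"
proof -
  interpret prob_space \<nu> using Pspace_D[OF assms(1)] by simp
  have sp: "space \<nu> = X" using Pspace_D[OF assms(1)] by simp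
  have XS: "X - S \<in> sets \<nu>" using finite_sets[OF assms(1) assms(4,5)] sp by auto
  have eq: "{x \<in> space \<nu>. \<not> x \<in> S} = X - S" using sp by auto
  have ae: "AE x in \<nu>. x \<in> S"
    using AE_iff_measurable[OF XS eq] null by simp
  have fm: "f \<in> borel_measurable \<nu>" by (rule cont_meas[OF assms(1,3)])
  have Sm: "S \<in> sets \<nu>" using finite_sets[OF assms(1) assms(4,5)] .
  have "integral\<^sup>L \<nu> f = integral\<^sup>L \<nu> (\<lambda>x. f x * indicator S x)"
  proof (rule integral_cong_AE)
    show "f \<in> borel_measurable \<nu>" by (rule fm)
    show "(\<lambda>x. f x * indicator S x) \<in> borel_measurable \<nu>"
      using fm Sm by (intro borel_measurable_times borel_measurable_indicator) auto
    show "AE x in \<nu>. f x = f x * indicator S x"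
      using ae by eventually_elim simp
  qed
  also have "\<dots> = (\<Sum>s\<in>S. f s * measure \<nu> {s})"
  proof (rule integral_indicator_finite_real)
    show "finite S" by fact
    show "{a} \<in> sets \<nu>" if "a \<in> S" for a using finite_sets[OF assms(1), of "{a}"] that assms(5) by auto
    show "emeasure \<nu> {a} < \<infinity>" for a by (simp add: less_top[symmetric])
  qed
  finally show ?thesis .
qed

lemma mval_finite:
  fixes X :: "'a::metric_space set"
  assumes "\<nu> \<in> Pspace X" "finite S" "S \<subseteq> X"
    and null: "emeasure \<nu> (X - S) = 0"
  shows "msupp \<nu> \<subseteq> S" "mval \<nu> Y = measure \<nu> (S \<inter> Y)"
proof -
  interpret prob_space \<nu> using Pspace_D[OF assms(1)] by simp
  have sp: "space \<nu> = X" using Pspace_D[OF assms(1)] by simp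
  show sub: "msupp \<nu> \<subseteq> S"
  proof
    fix a assume a: "a \<in> msupp \<nu>"
    then have aX: "a \<in> X" and pos: "measure \<nu> {a} > 0" using sp by (auto simp: msupp_def)
    show "a \<in> S"
    proof (rule ccontr)
      assume "a \<notin> S"
      then have "{a} \<subseteq> X - S" using aX by auto
      then have "emeasure \<nu> {a} \<le> emeasure \<nu> (X - S)"
        by (intro emeasure_mono) (use finite_sets[OF assms(1) assms(2,3)] sp in auto)
      then have "emeasure \<nu> {a} = 0" using null by simp
      then show False using pos by (simp add: measure_def)
    qed
  qed
  have "mval \<nu> Y = (\<Sum>a\<in>S \<inter> Y. measure \<nu> {a})"
    unfolding mval_def
  proof (rule sum.mono_neutral_left)
    show "finite (S \<inter> Y)" using assms(2) by simp
    show "msupp \<nu> \<inter> Y \<subseteq> S \<inter> Y" using sub by auto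
    show "\<forall>i\<in>S \<inter> Y - msupp \<nu> \<inter> Y. measure \<nu> {i} = 0"
      using assms(3) sp by (auto simp: msupp_def less_le)
  qed
  also have "\<dots> = measure \<nu> (S \<inter> Y)"
    by (rule measure_eq_sum_singleton[symmetric])
       (use assms(2,3) finite_sets[OF assms(1)] in auto)
  finally show "mval \<nu> Y = measure \<nu> (S \<inter> Y)" .
qed



lemma top_weak: "topspace (weak_top X) = Pspace X"
  by (auto simp: weak_top_def topspace_pullback_topology)

lemma int_cont:
  assumes "f \<in> Cfun X"
  shows "continuous_map (weak_top X) euclideanreal (\<lambda>\<nu>. integral\<^sup>L \<nu> f)"
proof -
  have "continuous_map (weak_top X) euclideanreal
      ((\<lambda>g. g f) \<circ> (\<lambda>M. restrict (\<lambda>f. integral\<^sup>L M f) (Cfun X)))"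
    unfolding weak_top_def
    by (rule continuous_map_pullback)
       (rule continuous_map_product_projection[OF assms, of "\<lambda>_. euclideanreal"])
  moreover have "((\<lambda>g. g f) \<circ> (\<lambda>M. restrict (\<lambda>f. integral\<^sup>L M f) (Cfun X))) = (\<lambda>\<nu>. integral\<^sup>L \<nu> f)"
    using assms by (auto simp: fun_eq_iff)
  ultimately show ?thesis by simp
qed

lemma closed_int:
  assumes "f \<in> Cfun X" "closed C"
  shows "closedin (weak_top X) {\<nu> \<in> Pspace X. integral\<^sup>L \<nu> f \<in> C}"
  using closedin_continuous_map_preimage[OF int_cont[OF assms(1)], of C] assms(2)
  by (simp add: top_weak)

lemma closed_all:
  fixes n :: nat
  assumes "\<And>i. i < n \<Longrightarrow> closedin T {x \<in> topspace T. P i x}"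
  shows "closedin T {x \<in> topspace T. \<forall>i<n. P i x}"
  using assms
proof (induction n)
  case 0
  then show ?case by simp
next
  case (Suc n)
  have "{x \<in> topspace T. \<forall>i<Suc n. P i x} =
        {x \<in> topspace T. \<forall>i<n. P i x} \<inter> {x \<in> topspace T. P n x}"
    using less_Suc_eq by auto
  then show ?case using Suc by (simp add: closedin_Int)
qed

lemma mix_props:
  assumes M: "M \<in> Pspace X" and N: "N \<in> Pspace X" and t: "0 \<le> t" "t \<le> 1"
  shows "mix t M N \<in> Pspace X"
    "\<And>A. A \<in> sets (restrict_space borel X) \<Longrightarrow> measure (mix t M N) A = t * measure M A + (1 - t) * measure N A"
    "\<And>A. A \<in> sets (restrict_space borel X) \<Longrightarrow> emeasure (mix t M N) A = ennreal t * emeasure M A + ennreal (1 - t) * emeasure N A"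
proof -
  note PM = Pspace_D[OF M] and PN = Pspace_D[OF N]
  interpret M: prob_space M by (rule PM(1))
  interpret N: prob_space N by (rule PN(1))
  let ?f = "\<lambda>A. ennreal t * emeasure M A + ennreal (1 - t) * emeasure N A"
  have ca: "countably_additive (sets M) ?f"
    unfolding countably_additive_def
  proof (intro allI impI)
    fix A :: "nat \<Rightarrow> _" assume A: "range A \<subseteq> sets M" "disjoint_family A" "\<Union> (range A) \<in> sets M"
    have AN: "range A \<subseteq> sets N" using A PM PN by simp
    have "(\<Sum>i. ?f (A i)) = (\<Sum>i. ennreal t * emeasure M (A i)) + (\<Sum>i. ennreal (1 - t) * emeasure N (A i))"
      by (rule suminf_add[symmetric]) auto
    also have "\<dots> = ?f (\<Union> (range A))"
      using suminf_emeasure[OF A(1,2)] suminf_emeasure[OF AN A(2)] by simp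
    finally show "(\<Sum>i. ?f (A i)) = ?f (\<Union> (range A))" .
  qed
  have pos: "positive (sets M) ?f" by (simp add: positive_def)
  have em: "emeasure (mix t M N) A = ?f A" if "A \<in> sets M" for A
    unfolding mix_def
    by (rule emeasure_measure_of_sigma[OF sets.sigma_algebra_axioms pos ca that])
  have sp: "space (mix t M N) = X" by (simp add: mix_def PM space_measure_of_conv)
  have "sets (mix t M N) = sets M" unfolding mix_def
    by (rule sigma_algebra.sets_measure_of_eq[OF sets.sigma_algebra_axioms])
  then have st: "sets (mix t M N) = sets (restrict_space borel X)" using PM by simp
  show em': "emeasure (mix t M N) A = ennreal t * emeasure M A + ennreal (1 - t) * emeasure N A"
    if "A \<in> sets (restrict_space borel X)" for A using em that PM by simp
  have "emeasure (mix t M N) (space (mix t M N)) = 1"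
  proof -
    have "emeasure (mix t M N) (space (mix t M N)) = ennreal t * 1 + ennreal (1 - t) * 1"
      using em[of X] PM PN M.emeasure_space_1 N.emeasure_space_1 sp by auto
    also have "\<dots> = 1" using t by (simp add: ennreal_plus[symmetric])
    finally show ?thesis .
  qed
  then have "prob_space (mix t M N)" by (rule prob_spaceI)
  then show "mix t M N \<in> Pspace X" using sp st by (simp add: Pspace_def)
  show "measure (mix t M N) A = t * measure M A + (1 - t) * measure N A"
    if "A \<in> sets (restrict_space borel X)" for A
  proof -
    have nn: "0 \<le> t * measure M A" "0 \<le> (1 - t) * measure N A" using t by auto
    have "emeasure (mix t M N) A = ennreal (t * measure M A) + ennreal ((1 - t) * measure N A)"
      using em'[OF that] t
      by (simp add: M.emeasure_eq_measure N.emeasure_eq_measure ennreal_mult'')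
    also have "\<dots> = ennreal (t * measure M A + (1 - t) * measure N A)"
      using nn by (simp add: ennreal_plus)
    finally have "emeasure (mix t M N) A = ennreal (t * measure M A + (1 - t) * measure N A)" .
    then have "measure (mix t M N) A = enn2real (ennreal (t * measure M A + (1 - t) * measure N A))"
      by (simp add: measure_def)
    then show ?thesis using nn by (metis add_nonneg_nonneg enn2real_ennreal)
  qed
qed

lemma witness_props:
  fixes X :: "'a::metric_space set"
  assumes a: "\<forall>i<n. a i \<in> X" and m: "\<forall>i<n. m i \<ge> 0" and s: "(\<Sum>i<n. m i) = 1"
  defines "\<nu> \<equiv> measure_of X (sets (restrict_space borel X)) (\<lambda>A. \<Sum>i<n. ennreal (m i) * indicator A (a i))"
  shows "\<nu> \<in> Pspace X"
    "\<And>A. A \<in> sets (restrict_space borel X) \<Longrightarrow> measure \<nu> A = (\<Sum>i<n. m i * indicator A (a i))"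
proof -
  let ?f = "\<lambda>A. \<Sum>i<n. ennreal (m i) * indicator A (a i)"
  have sa: "sigma_algebra X (sets (restrict_space borel X))"
    using sets.sigma_algebra_axioms[of "restrict_space borel X"] by (simp add: space_restrict_space)
  have ca: "countably_additive (sets (restrict_space borel X)) ?f"
    unfolding countably_additive_def
  proof (intro allI impI)
    fix A :: "nat \<Rightarrow> _" assume A: "range A \<subseteq> sets (restrict_space borel X)" "disjoint_family A"
    have "(\<Sum>j. ?f (A j)) = (\<Sum>i<n. \<Sum>j. ennreal (m i) * indicator (A j) (a i))"
      by (rule suminf_sum) auto
    also have "\<dots> = ?f (\<Union> (range A))"
      using suminf_indicator[OF A(2)] by simp
    finally show "(\<Sum>j. ?f (A j)) = ?f (\<Union> (range A))" .
  qed
  have pos: "positive (sets (restrict_space borel X)) ?f" by (simp add: positive_def)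
  have em: "emeasure \<nu> A = ?f A" if "A \<in> sets (restrict_space borel X)" for A
    unfolding \<nu>_def by (rule emeasure_measure_of_sigma[OF sa pos ca that])
  have sp: "space \<nu> = X" by (simp add: \<nu>_def space_measure_of_conv)
  have st: "sets \<nu> = sets (restrict_space borel X)"
    unfolding \<nu>_def using sa by (simp add: sigma_algebra.sets_measure_of_eq)
  have conv: "?f A = ennreal (\<Sum>i<n. m i * indicator A (a i))" for A
    using m by (subst sum_ennreal[symmetric]) (auto simp: indicator_def intro!: sum.cong)
  have XX: "X \<in> sets (restrict_space borel X)" using sets.top[of "restrict_space borel X"] by (simp add: space_restrict_space)
  have "emeasure \<nu> (space \<nu>) = 1"
    using em[OF XX] sp conv[of X] a s by (simp add: indicator_def)
  then have "prob_space \<nu>" by (rule prob_spaceI)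
  then show "\<nu> \<in> Pspace X" using sp st by (simp add: Pspace_def)
  show "measure \<nu> A = (\<Sum>i<n. m i * indicator A (a i))"
    if "A \<in> sets (restrict_space borel X)" for A
  proof -
    have "0 \<le> (\<Sum>i<n. m i * indicator A (a i))" using m by (intro sum_nonneg) auto
    then show ?thesis using em[OF that] conv[of A] by (simp add: measure_def)
  qed
qed



lemma h_val:
  fixes S :: "'a::metric_space set"
  assumes "finite S" "s \<in> S" "a \<in> S"
  shows "(\<Prod>b\<in>S - {a}. dist s b / dist a b) = (if s = a then 1 else 0)"
proof (cases "s = a")
  case True
  then have "(\<Prod>b\<in>S - {a}. dist s b / dist a b) = (\<Prod>b\<in>S - {a}. 1)"
    by (intro prod.cong) auto
  then show ?thesis using True by simp
next
  case False
  have "\<exists>b\<in>S - {a}. dist s b / dist a b = 0" using False assms by (intro bexI[of _ s]) auto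
  then show ?thesis using False assms(1) by (simp add: prod_zero)
qed

lemma g_val:
  fixes S :: "'a::metric_space set"
  assumes "finite S" "s \<in> S"
  shows "(\<Sum>a\<in>S \<inter> Y. \<Prod>b\<in>S - {a}. dist s b / dist a b) = (if s \<in> Y then 1 else 0)"
proof -
  have "(\<Sum>a\<in>S \<inter> Y. \<Prod>b\<in>S - {a}. dist s b / dist a b) = (\<Sum>a\<in>S \<inter> Y. if s = a then 1 else 0)"
    using assms by (intro sum.cong) (auto simp: h_val)
  also have "\<dots> = (if s \<in> Y then 1 else 0)" using assms by (simp add: sum.delta)
  finally show ?thesis .
qed

lemma g_cont:
  fixes S :: "'a::metric_space set"
  shows "continuous_on X (\<lambda>x. \<Sum>a\<in>S \<inter> Y. \<Prod>b\<in>S - {a}. dist x b / dist a b)"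
  by (intro continuous_intros) auto

lemma conv_abs:
  fixes t a b c e :: real
  assumes "0 \<le> t" "t \<le> 1" "\<bar>a - c\<bar> \<le> e" "\<bar>b - c\<bar> \<le> e"
  shows "\<bar>t * a + (1 - t) * b - c\<bar> \<le> e"
proof -
  have eq: "t * a + (1 - t) * b - c = t * (a - c) + (1 - t) * (b - c)" by (simp add: algebra_simps)
  have 1: "\<bar>t * (a - c)\<bar> \<le> t * e" using assms by (simp add: abs_mult mult_left_mono)
  have 2: "\<bar>(1 - t) * (b - c)\<bar> \<le> (1 - t) * e" using assms by (simp add: abs_mult mult_left_mono)
  have "\<bar>t * (a - c) + (1 - t) * (b - c)\<bar> \<le> \<bar>t * (a - c)\<bar> + \<bar>(1 - t) * (b - c)\<bar>"
    by (rule abs_triangle_ineq)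
  then show ?thesis using 1 2 eq by (simp add: algebra_simps)
qed



theorem proposition4p8:
  fixes X :: "'a::metric_space set" and \<W> :: "'a set set"
    and n :: nat and x :: "nat \<Rightarrow> 'a" and m :: "nat \<Rightarrow> real" and \<mu> :: "'a measure"
    and U :: "nat \<Rightarrow> 'a set" and \<epsilon> r :: real and \<zeta> :: "'a measure"
  assumes X: "compact X"
    and W_open: "\<forall>W\<in>\<W>. openin (top_of_set X) W"
    and W_cover: "\<Union>\<W> = X"
    and W_bdd: "\<exists>D. \<forall>W\<in>\<W>. bounded W \<and> diameter W \<le> D"
    and x_in: "\<forall>i<n. x i \<in> X"
    and x_inj: "inj_on x {..<n}"
    and m_pos: "\<forall>i<n. m i > 0"
    and mu_meas: "\<forall>A\<in>sets \<mu>. measure \<mu> A = (\<Sum>i\<in>{i. i < n \<and> x i \<in> A}. m i)"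
    and mu_Viet: "\<mu> \<in> VietM X \<W>"
    and U_open: "\<forall>i<n. openin (top_of_set X) (U i)"
    and U_disj: "\<forall>i<n. \<forall>j<n. i \<noteq> j \<longrightarrow> U i \<inter> U j = {}"
    and x_U: "\<forall>i<n. x i \<in> U i"
    and U_W: "\<exists>W\<in>\<W>. (\<Union>i<n. U i) \<subseteq> W"
    and eps: "\<epsilon> > 0"
    and r: "r > 0"
    and zeta: "\<zeta> \<in> P_U X \<W> n U \<inter> {\<nu> \<in> VietM X \<W>. wasserstein X \<mu> \<nu> < r}"
  shows "Fmap X \<W> \<mu> n U \<epsilon> \<zeta> \<noteq> {} \<and> mconvex (Fmap X \<W> \<mu> n U \<epsilon> \<zeta>)
         \<and> closedin (weak_top X) (Fmap X \<W> \<mu> n U \<epsilon> \<zeta>)"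
proof -
  have zV: "\<zeta> \<in> VietM X \<W>" and zU: "\<forall>i<n. msupp \<zeta> \<inter> U i \<noteq> {}"
    using zeta by (auto simp: P_U_def)
  have zP: "\<zeta> \<in> Pspace X" and zfin: "finite (msupp \<zeta>)" using zV by (auto simp: VietM_def)
  have zX: "msupp \<zeta> \<subseteq> X" using Pspace_D(2)[OF zP] by (auto simp: msupp_def)
  define S where "S = msupp \<zeta> \<inter> (\<Union>i<n. U i)"
  have Sfin: "finite S" and SX: "S \<subseteq> X" using zfin zX by (auto simp: S_def)
  have muP: "\<mu> \<in> Pspace X" using mu_Viet by (auto simp: VietM_def)
  note muD = Pspace_D[OF muP]
  interpret mu: prob_space \<mu> by (rule muD(1))
  have sum1: "(\<Sum>i<n. m i) = 1"
  proof -
    have "X \<in> sets \<mu>" using sets.top[of \<mu>] muD(2) by simp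
    then have "measure \<mu> X = (\<Sum>i\<in>{i. i < n \<and> x i \<in> X}. m i)" using mu_meas by blast
    also have "{i. i < n \<and> x i \<in> X} = {..<n}" using x_in by auto
    finally show ?thesis using mu.prob_space muD(2) by simp
  qed
  have npos: "n > 0" using sum1 by (cases n) auto
  have Sne: "S \<noteq> {}" using zU npos unfolding S_def by blast
  have mvmu: "mval \<mu> (U i) = m i" if i: "i < n" for i
  proof -
    have meas_pt: "measure \<mu> {a} = (\<Sum>j\<in>{j. j < n \<and> x j \<in> {a}}. m j)" if "a \<in> X" for a
      using mu_meas finite_sets[OF muP, of "{a}"] that by auto
    have xi: "measure \<mu> {x i} = m i"
    proof -
      have "{j. j < n \<and> x j \<in> {x i}} = {i}" using x_inj i by (auto simp: inj_on_def)
      then show ?thesis using meas_pt[of "x i"] x_in i by simp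
    qed
    have "msupp \<mu> \<inter> U i = {x i}"
    proof
      show "{x i} \<subseteq> msupp \<mu> \<inter> U i" using xi m_pos x_U x_in i muD(2) by (auto simp: msupp_def)
      show "msupp \<mu> \<inter> U i \<subseteq> {x i}"
      proof
        fix a assume a: "a \<in> msupp \<mu> \<inter> U i"
        then have aX: "a \<in> X" and pos: "measure \<mu> {a} > 0" using muD(2) by (auto simp: msupp_def)
        have "{j. j < n \<and> x j \<in> {a}} \<noteq> {}"
        proof
          assume e: "{j. j < n \<and> x j \<in> {a}} = {}"
          have "measure \<mu> {a} = 0" using meas_pt[OF aX] unfolding e by simp
          then show False using pos by simp
        qed
        then obtain j where j: "j < n" "x j = a" by auto
        then have "j = i" using U_disj x_U a i by blast
        then show "a \<in> {x i}" using j by simp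
      qed
    qed
    then show ?thesis unfolding mval_def using xi by simp
  qed
  have XS_sets: "X - S \<in> sets \<nu>" if "\<nu> \<in> Pspace X" for \<nu>
    using finite_sets[OF that Sfin SX] Pspace_D[OF that] by (metis sets.compl_sets)
  have SU_sets: "S \<inter> U i \<in> sets \<nu>" if "\<nu> \<in> Pspace X" for \<nu> i
    using finite_sets[OF that, of "S \<inter> U i"] Sfin SX by auto
  define Q where "Q = {\<nu> \<in> Pspace X. emeasure \<nu> (X - S) = 0 \<and>
      (\<forall>i<n. \<bar>measure \<nu> (S \<inter> U i) - m i\<bar> \<le> \<epsilon>)}"
  have FQ: "Fmap X \<W> \<mu> n U \<epsilon> \<zeta> = Q"
  proof
    show "Fmap X \<W> \<mu> n U \<epsilon> \<zeta> \<subseteq> Q"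
    proof
      fix \<nu> assume "\<nu> \<in> Fmap X \<W> \<mu> n U \<epsilon> \<zeta>"
      then have V: "\<nu> \<in> VietM X \<W>" and s1: "msupp \<nu> \<subseteq> (\<Union>i<n. U i)"
        and s2: "msupp \<nu> \<subseteq> msupp \<zeta>" and mv: "\<forall>i<n. \<bar>mval \<nu> (U i) - mval \<mu> (U i)\<bar> \<le> \<epsilon>"
        by (auto simp: Fmap_def P_mu_def)
      have P: "\<nu> \<in> Pspace X" and nfin: "finite (msupp \<nu>)" and n0: "measure \<nu> (X - msupp \<nu>) = 0"
        using V by (auto simp: VietM_def)
      note nD = Pspace_D[OF P]
      interpret nu: prob_space \<nu> by (rule nD(1))
      have nX: "msupp \<nu> \<subseteq> X" using nD(2) by (auto simp: msupp_def)
      have sub: "msupp \<nu> \<subseteq> S" using s1 s2 by (auto simp: S_def)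
      have "X - msupp \<nu> \<in> sets \<nu>"
        using finite_sets[OF P nfin nX] nD(2) by (metis sets.compl_sets)
      then have e0: "emeasure \<nu> (X - msupp \<nu>) = 0" using n0 nu.emeasure_eq_measure by simp
      have "emeasure \<nu> (X - S) \<le> emeasure \<nu> (X - msupp \<nu>)"
        using sub \<open>X - msupp \<nu> \<in> sets \<nu>\<close> by (intro emeasure_mono) auto
      then have null: "emeasure \<nu> (X - S) = 0" using e0 by simp
      have "\<bar>measure \<nu> (S \<inter> U i) - m i\<bar> \<le> \<epsilon>" if "i < n" for i
        using mv that mvmu[OF that] mval_finite(2)[OF P Sfin SX null, of "U i"] by metis
      then show "\<nu> \<in> Q" using P null by (simp add: Q_def)
    qed
    show "Q \<subseteq> Fmap X \<W> \<mu> n U \<epsilon> \<zeta>"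
    proof
      fix \<nu> assume "\<nu> \<in> Q"
      then have P: "\<nu> \<in> Pspace X" and null: "emeasure \<nu> (X - S) = 0"
        and mq: "\<forall>i<n. \<bar>measure \<nu> (S \<inter> U i) - m i\<bar> \<le> \<epsilon>" by (auto simp: Q_def)
      note nD = Pspace_D[OF P]
      interpret nu: prob_space \<nu> by (rule nD(1))
      have sub: "msupp \<nu> \<subseteq> S" by (rule mval_finite(1)[OF P Sfin SX null])
      have nfin: "finite (msupp \<nu>)" using sub Sfin finite_subset by blast
      have m1: "measure \<nu> (S - msupp \<nu>) = (\<Sum>a\<in>S - msupp \<nu>. measure \<nu> {a})"
        by (rule measure_eq_sum_singleton) (use Sfin SX finite_sets[OF P] in auto)
      also have "\<dots> = 0"
      proof (rule sum.neutral, rule ballI)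
        fix a assume a: "a \<in> S - msupp \<nu>"
        then have "\<not> measure \<nu> {a} > 0" using SX nD(2) by (auto simp: msupp_def)
        then show "measure \<nu> {a} = 0" using measure_nonneg[of \<nu> "{a}"] by linarith
      qed
      finally have m1': "measure \<nu> (S - msupp \<nu>) = 0" .
      have m2: "measure \<nu> (X - S) = 0" using null by (simp add: measure_def)
      have "X - msupp \<nu> = (X - S) \<union> (S - msupp \<nu>)" using sub SX by auto
      then have "measure \<nu> (X - msupp \<nu>) \<le> measure \<nu> (X - S) + measure \<nu> (S - msupp \<nu>)"
        using measure_Un_le[OF XS_sets[OF P], of "S - msupp \<nu>"] finite_sets[OF P, of "S - msupp \<nu>"]
          Sfin SX by auto
      then have n0: "measure \<nu> (X - msupp \<nu>) = 0" using m1' m2 measure_nonneg[of \<nu> "X - msupp \<nu>"]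
        by linarith
      obtain W where W: "W \<in> \<W>" "(\<Union>i<n. U i) \<subseteq> W" using U_W by blast
      have s1: "msupp \<nu> \<subseteq> (\<Union>i<n. U i)" and s2: "msupp \<nu> \<subseteq> msupp \<zeta>" using sub by (auto simp: S_def)
      have sW: "msupp \<nu> \<subseteq> W" using s1 W(2) by (rule subset_trans)
      have V: "\<nu> \<in> VietM X \<W>" unfolding VietM_def using P nfin n0 W(1) sW by blast
      have "\<bar>mval \<nu> (U i) - mval \<mu> (U i)\<bar> \<le> \<epsilon>" if "i < n" for i
        using mq that mvmu[OF that] mval_finite(2)[OF P Sfin SX null, of "U i"] by metis
      then show "\<nu> \<in> Fmap X \<W> \<mu> n U \<epsilon> \<zeta>" using V s1 s2 by (auto simp: Fmap_def P_mu_def)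
    qed
  qed
  have ne: "Q \<noteq> {}"
  proof -
    have "\<forall>i. \<exists>b. i < n \<longrightarrow> b \<in> msupp \<zeta> \<inter> U i"
    proof
      fix i show "\<exists>b. i < n \<longrightarrow> b \<in> msupp \<zeta> \<inter> U i" using zU by (cases "i < n") auto
    qed
    then obtain a where a: "\<forall>i<n. a i \<in> msupp \<zeta> \<inter> U i" by metis
    have aS: "\<forall>i<n. a i \<in> S" using a by (auto simp: S_def)
    have aX: "\<forall>i<n. a i \<in> X" using aS SX by auto
    define \<nu> where "\<nu> = measure_of X (sets (restrict_space borel X)) (\<lambda>A. \<Sum>i<n. ennreal (m i) * indicator A (a i))"
    have m0: "\<forall>i<n. m i \<ge> 0" using m_pos by auto
    note W = witness_props[OF aX m0 sum1, folded \<nu>_def]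
    have P: "\<nu> \<in> Pspace X" by (rule W(1))
    note nD = Pspace_D[OF P]
    interpret nu: prob_space \<nu> by (rule nD(1))
    have "measure \<nu> (X - S) = (\<Sum>i<n. m i * indicator (X - S) (a i))"
      using W(2) XS_sets[OF P] nD(3) by simp
    also have "\<dots> = 0" using aS by (intro sum.neutral) auto
    finally have null: "emeasure \<nu> (X - S) = 0" using nu.emeasure_eq_measure by simp
    have "measure \<nu> (S \<inter> U i) = m i" if i: "i < n" for i
    proof -
      have "measure \<nu> (S \<inter> U i) = (\<Sum>j<n. m j * indicator (S \<inter> U i) (a j))"
        using W(2) SU_sets[OF P] nD(3) by simp
      also have "\<dots> = (\<Sum>j<n. if j = i then m j else 0)"
      proof (rule sum.cong)
        fix j assume j: "j \<in> {..<n}"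
        have jn: "j < n" using j by simp
        have aj: "a j \<in> S" "a j \<in> U j" using a aS jn by auto
        have "a j \<notin> U i" if "j \<noteq> i"
        proof
          assume "a j \<in> U i"
          then have "a j \<in> U i \<inter> U j" using aj by simp
          moreover have "U i \<inter> U j = {}" using U_disj i jn that by simp
          ultimately show False by simp
        qed
        then have "a j \<in> S \<inter> U i \<longleftrightarrow> j = i" using aj by auto
        then show "m j * indicator (S \<inter> U i) (a j) = (if j = i then m j else 0)" by auto
      qed simp
      also have "\<dots> = m i" using i by simp
      finally show ?thesis .
    qed
    then have "\<nu> \<in> Q" using P null eps by (simp add: Q_def)
    then show ?thesis by auto
  qed
  have cv: "mconvex Q"
    unfolding mconvex_def
  proof (intro ballI)
    fix M N t assume M: "M \<in> Q" and N: "N \<in> Q" and t: "t \<in> {0..1::real}"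
    have MP: "M \<in> Pspace X" and NP: "N \<in> Pspace X" using M N by (auto simp: Q_def)
    have t0: "0 \<le> t" "t \<le> 1" using t by auto
    note mp = mix_props[OF MP NP t0]
    have "emeasure (mix t M N) (X - S) = ennreal t * emeasure M (X - S) + ennreal (1 - t) * emeasure N (X - S)"
      using mp(3) XS_sets[OF muP] muD(3) by simp
    then have null: "emeasure (mix t M N) (X - S) = 0" using M N by (simp add: Q_def)
    have "\<bar>measure (mix t M N) (S \<inter> U i) - m i\<bar> \<le> \<epsilon>" if i: "i < n" for i
    proof -
      have "measure (mix t M N) (S \<inter> U i) = t * measure M (S \<inter> U i) + (1 - t) * measure N (S \<inter> U i)"
        using mp(2) SU_sets[OF muP] muD(3) by simp
      moreover have "\<bar>measure M (S \<inter> U i) - m i\<bar> \<le> \<epsilon>" "\<bar>measure N (S \<inter> U i) - m i\<bar> \<le> \<epsilon>"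
        using M N i by (auto simp: Q_def)
      ultimately show ?thesis using conv_abs[OF t0] by simp
    qed
    then show "mix t M N \<in> Q" using mp(1) null by (simp add: Q_def)
  qed
  define dS where "dS = (\<lambda>y. infdist y S)"
  define g where "g = (\<lambda>i y. \<Sum>a\<in>S \<inter> U i. \<Prod>b\<in>S - {a}. dist y b / dist a b)"
  have dS_C: "dS \<in> Cfun X" unfolding dS_def Cfun_def by (auto intro!: continuous_intros)
  have g_C: "g i \<in> Cfun X" for i unfolding g_def Cfun_def by (rule CollectI, rule g_cont)
  have gS: "g i s = (if s \<in> U i then 1 else 0)" if "s \<in> S" for i s
    unfolding g_def by (rule g_val[OF Sfin that])
  have int_g: "integral\<^sup>L \<nu> (g i) = measure \<nu> (S \<inter> U i)"
    if P: "\<nu> \<in> Pspace X" and null: "emeasure \<nu> (X - S) = 0" for \<nu> i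
  proof -
    interpret nu: prob_space \<nu> by (rule Pspace_D(1)[OF P])
    have "integral\<^sup>L \<nu> (g i) = (\<Sum>s\<in>S. g i s * measure \<nu> {s})"
      using int_finite[OF P X _ Sfin SX null] g_C by (simp add: Cfun_def)
    also have "\<dots> = (\<Sum>s\<in>S. if s \<in> U i then measure \<nu> {s} else 0)"
      using gS by (intro sum.cong) auto
    also have "\<dots> = (\<Sum>s\<in>S \<inter> U i. measure \<nu> {s})"
      using Sfin by (simp add: sum.If_cases Int_def)
    also have "\<dots> = measure \<nu> (S \<inter> U i)"
      by (rule measure_eq_sum_singleton[symmetric]) (use Sfin SX finite_sets[OF P] in auto)
    finally show ?thesis .
  qed
  have null_iff: "emeasure \<nu> (X - S) = 0 \<longleftrightarrow> integral\<^sup>L \<nu> dS = 0" if P: "\<nu> \<in> Pspace X" for \<nu>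
  proof
    assume null: "emeasure \<nu> (X - S) = 0"
    have "integral\<^sup>L \<nu> dS = (\<Sum>s\<in>S. dS s * measure \<nu> {s})"
      using int_finite[OF P X _ Sfin SX null] dS_C by (simp add: Cfun_def)
    also have "\<dots> = 0" by (intro sum.neutral) (auto simp: dS_def)
    finally show "integral\<^sup>L \<nu> dS = 0" .
  next
    assume i0: "integral\<^sup>L \<nu> dS = 0"
    have intg: "integrable \<nu> dS" using cont_integrable[OF P X] dS_C by (simp add: Cfun_def)
    have "AE y in \<nu>. dS y = 0"
      using integral_nonneg_eq_0_iff_AE[OF intg] i0 by (simp add: dS_def infdist_nonneg)
    then have ae: "AE y in \<nu>. y \<in> S"
      using in_closed_iff_infdist_zero[OF finite_imp_closed[OF Sfin] Sne] by (simp add: dS_def)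
    have eq: "{y \<in> space \<nu>. \<not> y \<in> S} = X - S" using Pspace_D(2)[OF P] by auto
    show "emeasure \<nu> (X - S) = 0"
      using AE_iff_measurable[OF XS_sets[OF P] eq] ae by simp
  qed
  define A0 where "A0 = {\<nu> \<in> Pspace X. integral\<^sup>L \<nu> dS \<in> {0}}"
  define A1 where "A1 = {\<nu> \<in> topspace (weak_top X). \<forall>i<n. integral\<^sup>L \<nu> (g i) \<in> cball (m i) \<epsilon>}"
  have QA: "Q = A0 \<inter> A1"
  proof (intro set_eqI iffI)
    fix \<nu> assume "\<nu> \<in> Q"
    then have P: "\<nu> \<in> Pspace X" and null: "emeasure \<nu> (X - S) = 0"
        and mq: "\<forall>i<n. \<bar>measure \<nu> (S \<inter> U i) - m i\<bar> \<le> \<epsilon>" by (auto simp: Q_def)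
    show "\<nu> \<in> A0 \<inter> A1"
      using P null_iff[OF P] null mq int_g[OF P null]
      by (auto simp: A0_def A1_def top_weak dist_real_def abs_minus_commute)
  next
    fix \<nu> assume "\<nu> \<in> A0 \<inter> A1"
    then have P: "\<nu> \<in> Pspace X" and i0: "integral\<^sup>L \<nu> dS = 0"
      and mq: "\<forall>i<n. integral\<^sup>L \<nu> (g i) \<in> cball (m i) \<epsilon>" by (auto simp: A0_def A1_def)
    have null: "emeasure \<nu> (X - S) = 0" using null_iff[OF P] i0 by simp
    show "\<nu> \<in> Q"
      using P null mq int_g[OF P null]
      by (auto simp: Q_def dist_real_def abs_minus_commute)
  qed
  have cA0: "closedin (weak_top X) A0" unfolding A0_def by (rule closed_int[OF dS_C closed_singleton])
  have cA1: "closedin (weak_top X) A1" unfolding A1_def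
  proof (rule closed_all)
    fix i show "closedin (weak_top X) {\<nu> \<in> topspace (weak_top X). integral\<^sup>L \<nu> (g i) \<in> cball (m i) \<epsilon>}"
      using closed_int[OF g_C closed_cball] by (simp add: top_weak)
  qed
  have cl: "closedin (weak_top X) Q" unfolding QA by (rule closedin_Int[OF cA0 cA1])
  show ?thesis using ne cv cl FQ by simp
qed

end
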